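(* Let $\mathbf G=(G,\le,\cdot,/,0,1)$ be a left-residuated po-groupoid satisfying the double negation law $\neg\neg x=x$ and the equation $(x\to y)\to y=(y\to x)\to x$ for all $x,y\in G$. Then $(G,\le)$ is a join-semilattice in which $x\vee y=(x\to y)\to y$ for all $x,y$. Moreover, for every $a\in G$, the map $\gamma_a\colon[a)\to[a)$, $\gamma_a(x)=x\to a$, is a well-defined antitone involution on the principal filter $[a)=\{x\in G: a\le x\}$ (i.e. $x\le y$ implies $\gamma_a(y)\le\gamma_a(x)$, and $\gamma_a(\gamma_a(x))=x$).
   Context: A (bounded integral) left-residuated po-groupoid is a structure $\mathbf G=(G,\le,\cdot,/,0,1)$ where $(G,\le,0,1)$ is a bounded poset with least element $0$ and greatest element $1$, $\cdot$ is a binary operation on $G$ with $1\cdot x=x\cdot 1=x$ for all $x$ (no associativity, commutativity or monotonicity is assumed), and $/$ is a binary operation on $G$ satisfying the left residuation law: for all $x,y,z\in G$, $x\cdot y\le z\iff x\le z/y$. The negation is defined by $\neg x:=0/x$ and the implication by $x\to y:=\neg x/\neg y$. *)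

theory Defs
  imports Main
begin

text \<open>A bounded integral left-residuated po-groupoid on the partially ordered type 'a,
  with multiplication m, left residual r (x / y = r x y), least element z (= 0)
  and greatest element u (= 1).\<close>
definition left_res_pogroupoid ::
  "('a::order \<Rightarrow> 'a \<Rightarrow> 'a) \<Rightarrow> ('a \<Rightarrow> 'a \<Rightarrow> 'a) \<Rightarrow> 'a \<Rightarrow> 'a \<Rightarrow> bool" where
  "left_res_pogroupoid m r z u \<longleftrightarrow>
     (\<forall>x. z \<le> x \<and> x \<le> u) \<and>
     (\<forall>x. m u x = x \<and> m x u = x) \<and>
     (\<forall>x y w. m x y \<le> w \<longleftrightarrow> x \<le> r w y)"

definition neg :: "('a \<Rightarrow> 'a \<Rightarrow> 'a) \<Rightarrow> 'a \<Rightarrow> 'a \<Rightarrow> 'a" where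
  "neg r z x = r z x"

definition imp :: "('a \<Rightarrow> 'a \<Rightarrow> 'a) \<Rightarrow> 'a \<Rightarrow> 'a \<Rightarrow> 'a \<Rightarrow> 'a" where
  "imp r z x y = r (neg r z x) (neg r z y)"

end

theory Submission
  imports Defs
begin

theorem lemma4:
  fixes m r :: "'a::order \<Rightarrow> 'a \<Rightarrow> 'a" and z u :: 'a
  assumes G: "left_res_pogroupoid m r z u"
    and dn: "\<And>x. neg r z (neg r z x) = x"
    and comm: "\<And>x y. imp r z (imp r z x y) y = imp r z (imp r z y x) x"
  shows "(\<forall>x y. x \<le> imp r z (imp r z x y) y \<and> y \<le> imp r z (imp r z x y) y \<and>
            (\<forall>w. x \<le> w \<and> y \<le> w \<longrightarrow> imp r z (imp r z x y) y \<le> w))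
       \<and> (\<forall>a x. a \<le> x \<longrightarrow> a \<le> imp r z x a)
       \<and> (\<forall>a x y. a \<le> x \<longrightarrow> a \<le> y \<longrightarrow> x \<le> y \<longrightarrow> imp r z y a \<le> imp r z x a)
       \<and> (\<forall>a x. a \<le> x \<longrightarrow> imp r z (imp r z x a) a = x)"
proof -
  have bz: "\<And>x. z \<le> x" and bu: "\<And>x. x \<le> u" and mu: "\<And>x. m u x = x"
    and res: "\<And>x y w. m x y \<le> w \<longleftrightarrow> x \<le> r w y"
    using G unfolding left_res_pogroupoid_def by auto
  have dn': "\<And>x. r z (r z x) = x" using dn by (simp add: neg_def)
  have imp': "\<And>x y. imp r z x y = r (r z x) (r z y)" by (simp add: imp_def neg_def)
  have comm': "\<And>x y. r (r z (r (r z x) (r z y))) (r z y) = r (r z (r (r z y) (r z x))) (r z x)"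
    using comm by (simp add: imp')
  have one: "\<And>w y. y \<le> w \<Longrightarrow> r w y = u"
    by (metis antisym bu res mu)
  have Nu: "r z u = z"
  proof -
    have "m (r z u) u \<le> z" using res by blast
    then show ?thesis using G unfolding left_res_pogroupoid_def by (metis antisym bz)
  qed
  have mono1: "\<And>w w' y. w \<le> w' \<Longrightarrow> r w y \<le> r w' y"
    by (metis order_trans res order_refl)
  have anti: "\<And>x y. x \<le> y \<Longrightarrow> r z y \<le> r z x"
  proof -
    fix x y :: 'a assume xy: "x \<le> y"
    have e: "r (r z (r y x)) x = r (r z (r x y)) y"
      using comm'[of "r z y" "r z x"] by (simp add: dn')
    have "r (r z (r y x)) x = r z x" using one[OF xy] Nu by simp
    moreover have "m (r z y) y \<le> r z (r x y)"
      using res[of "r z y" y z] bz order_trans by blast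
    ultimately show "r z y \<le> r z x" using e res by metis
  qed
  have impanti: "\<And>x x' y. x \<le> x' \<Longrightarrow> imp r z x' y \<le> imp r z x y"
    by (simp add: imp' anti mono1)
  have imp1: "\<And>a. imp r z u a = a"
    by (simp add: imp' Nu dn')
  have impone: "\<And>x y. x \<le> y \<Longrightarrow> imp r z x y = u"
    by (simp add: imp' anti one)
  have ge: "\<And>a x. a \<le> imp r z x a"
    by (metis imp1 impanti bu)
  have inv: "\<And>a x. a \<le> x \<Longrightarrow> imp r z (imp r z x a) a = x"
    by (metis comm impone imp1)
  show ?thesis
  proof (intro conjI allI impI)
    fix x y :: 'a show "x \<le> imp r z (imp r z x y) y" by (metis comm ge)
  next
    fix x y :: 'a show "y \<le> imp r z (imp r z x y) y" by (rule ge)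
  next
    fix x y w :: 'a assume "x \<le> w \<and> y \<le> w"
    then show "imp r z (imp r z x y) y \<le> w"
      by (metis impanti inv)
  next
    fix a x :: 'a assume "a \<le> x" show "a \<le> imp r z x a" by (rule ge)
  next
    fix a x y :: 'a assume "x \<le> y" then show "imp r z y a \<le> imp r z x a" by (rule impanti)
  next
    fix a x :: 'a assume "a \<le> x" then show "imp r z (imp r z x a) a = x" by (rule inv)
  qed
qed

end
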